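(* Assume the pair $(\mathcal D,\mathcal F)$ is good. Then for every $\varepsilon\in(0,1)$, $\mathrm{RiskA}(\varepsilon)\le\Phi_*(\ln(2/\varepsilon))$. More precisely, for every $\delta>0$ there exist $\phi\in\mathcal F$ and $c\in\mathbb R$ such that the affine estimate $\hat g=\phi+c$ satisfies $\mathrm{Risk}(\hat g;\varepsilon)\le\Phi_*(\ln(2/\varepsilon))+\delta$.
   Context: Let $(\Omega,P)$ be a Polish space equipped with a $\sigma$-finite Borel measure $P$, let $\mathcal M\subset\mathbb R^m$, and let $\mathcal D=\{p_\mu\}_{\mu\in\mathcal M}$ be a parametric density family: for each $\mu\in\mathcal M$, $p_\mu$ is a nonnegative Borel function on $\Omega$ with $\int_\Omega p_\mu\,dP=1$. Let $\mathcal F$ be a finite-dimensional linear space of Borel functions on $\Omega$ containing the constants. The pair $(\mathcal D,\mathcal F)$ is called good if: (1) $\mathcal M$ is an open convex subset of $\mathbb R^m$; (2) $p_\mu(\omega)>0$ for all $\mu\in\mathcal M$, $\omega\in\Omega$; (3) for all $\mu,\nu\in\mathcal M$ the function $\omega\mapsto\ln(p_\mu(\omega)/p_\nu(\omega))$ belongs to $\mathcal F$; (4) for every $\phi\in\mathcal F$ the function $\mu\mapsto\ln\int_\Omega e^{\phi(\omega)}p_\mu(\omega)P(d\omega)$ is well defined (finite) and concave on $\mathcal M$. Let $X\subset\mathbb R^n$ be a nonempty convex compact set, $x\mapsto A(x)$ an affine map $\mathbb R^n\to\mathbb R^m$ with $A(X)\subset\mathcal M$, and $g\in\mathbb R^n$.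 An observation $\omega$ has density $p_{A(x)}$ w.r.t. $P$ for an unknown $x\in X$; the goal is to estimate $g^Tx$. An estimate is a Borel function $\hat g:\Omega\to\mathbb R$; it is called affine if $\hat g\in\mathcal F$. For $\varepsilon\in(0,1)$ the $\varepsilon$-risk of $\hat g$ is $\mathrm{Risk}(\hat g;\varepsilon)=\inf\{\delta:\ \sup_{x\in X}\mathrm{Prob}_{\omega\sim p_{A(x)}}\{|\hat g(\omega)-g^Tx|>\delta\}<\varepsilon\}$; $\mathrm{RiskA}(\varepsilon)=\inf_{\phi\in\mathcal F}\mathrm{Risk}(\phi;\varepsilon)$. For $r\ge0$, $x,y\in X$, $\phi\in\mathcal F$, $\alpha>0$ define $$\Phi_r(x,y;\phi,\alpha)=g^Tx-g^Ty+\alpha\ln\int_\Omega e^{\phi(\omega)/\alpha}p_{A(y)}(\omega)P(d\omega)+\alpha\ln\int_\Omega e^{-\phi(\omega)/\alpha}p_{A(x)}(\omega)P(d\omega)+2\alpha r,$$ and $\Phi_*(r)=\tfrac12\inf_{\phi\in\mathcal F,\alpha>0}\sup_{x,y\in X}\Phi_r(x,y;\phi,\alpha)$. *)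

theory Defs
  imports "HOL-Analysis.Analysis"
begin

definition fin_dim_borel_space :: "'w measure \<Rightarrow> ('w \<Rightarrow> real) set \<Rightarrow> bool" where
  "fin_dim_borel_space P F \<longleftrightarrow>
     (\<exists>(k::nat) (b::nat \<Rightarrow> 'w \<Rightarrow> real).
        (\<forall>i<k. b i \<in> borel_measurable P) \<and>
        F = {(\<lambda>\<omega>. \<Sum>i<k. c i * b i \<omega>) | c. True})"

definition contains_constants :: "('w \<Rightarrow> real) set \<Rightarrow> bool" where
  "contains_constants F \<longleftrightarrow> (\<forall>c::real. (\<lambda>_. c) \<in> F)"

definition density_family :: "'w measure \<Rightarrow> 'm set \<Rightarrow> ('m \<Rightarrow> 'w \<Rightarrow> real) \<Rightarrow> bool" where
  "density_family P M p \<longleftrightarrow>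
     (\<forall>\<mu>\<in>M. p \<mu> \<in> borel_measurable P \<and> (\<forall>\<omega>\<in>space P. p \<mu> \<omega> \<ge> 0) \<and>
            (\<integral>\<^sup>+\<omega>. ennreal (p \<mu> \<omega>) \<partial>P) = 1)"

text \<open>The pair (D, F) is good.  Finiteness of the integral of exp(phi) * p mu
  (for a nonnegative Borel integrand) is expressed as Lebesgue integrability.\<close>
definition good_pair :: "'w measure \<Rightarrow> ('m::euclidean_space) set \<Rightarrow> ('m \<Rightarrow> 'w \<Rightarrow> real)
    \<Rightarrow> ('w \<Rightarrow> real) set \<Rightarrow> bool" where
  "good_pair P M p F \<longleftrightarrow>
     open M \<and> convex M \<and>
     (\<forall>\<mu>\<in>M. \<forall>\<omega>\<in>space P. p \<mu> \<omega> > 0) \<and>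
     (\<forall>\<mu>\<in>M. \<forall>\<nu>\<in>M. (\<lambda>\<omega>. ln (p \<mu> \<omega> / p \<nu> \<omega>)) \<in> F) \<and>
     (\<forall>\<phi>\<in>F. (\<forall>\<mu>\<in>M. integrable P (\<lambda>\<omega>. exp (\<phi> \<omega>) * p \<mu> \<omega>)) \<and>
              concave_on M (\<lambda>\<mu>. ln (\<integral>\<omega>. exp (\<phi> \<omega>) * p \<mu> \<omega> \<partial>P)))"

definition affine_map :: "('a::real_vector \<Rightarrow> 'b::real_vector) \<Rightarrow> bool" where
  "affine_map A \<longleftrightarrow> (\<exists>L b. linear L \<and> (\<forall>x. A x = L x + b))"

definition dev_prob :: "'w measure \<Rightarrow> ('m \<Rightarrow> 'w \<Rightarrow> real) \<Rightarrow> ('n \<Rightarrow> 'm) \<Rightarrow> ('n::real_inner)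
    \<Rightarrow> ('w \<Rightarrow> real) \<Rightarrow> 'n \<Rightarrow> real \<Rightarrow> real" where
  "dev_prob P p A g gh x \<delta> =
     measure (density P (\<lambda>\<omega>. ennreal (p (A x) \<omega>))) {\<omega>\<in>space P. \<bar>gh \<omega> - g \<bullet> x\<bar> > \<delta>}"

text \<open>epsilon-risk (with value +infinity if no delta qualifies).\<close>
definition Risk :: "'w measure \<Rightarrow> ('m \<Rightarrow> 'w \<Rightarrow> real) \<Rightarrow> ('n \<Rightarrow> 'm) \<Rightarrow> 'n set \<Rightarrow> ('n::real_inner)
    \<Rightarrow> ('w \<Rightarrow> real) \<Rightarrow> real \<Rightarrow> ereal" where
  "Risk P p A X g gh \<epsilon> =
     Inf {ereal \<delta> | \<delta>. (SUP x\<in>X. dev_prob P p A g gh x \<delta>) < \<epsilon>}"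

definition RiskA :: "'w measure \<Rightarrow> ('m \<Rightarrow> 'w \<Rightarrow> real) \<Rightarrow> ('n \<Rightarrow> 'm) \<Rightarrow> 'n set \<Rightarrow> ('n::real_inner)
    \<Rightarrow> ('w \<Rightarrow> real) set \<Rightarrow> real \<Rightarrow> ereal" where
  "RiskA P p A X g F \<epsilon> = Inf {Risk P p A X g \<phi> \<epsilon> | \<phi>. \<phi> \<in> F}"

definition Phi_r :: "'w measure \<Rightarrow> ('m \<Rightarrow> 'w \<Rightarrow> real) \<Rightarrow> ('n \<Rightarrow> 'm) \<Rightarrow> ('n::real_inner)
    \<Rightarrow> real \<Rightarrow> 'n \<Rightarrow> 'n \<Rightarrow> ('w \<Rightarrow> real) \<Rightarrow> real \<Rightarrow> real" where
  "Phi_r P p A g r x y \<phi> \<alpha> =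
     g \<bullet> x - g \<bullet> y
     + \<alpha> * ln (\<integral>\<omega>. exp (\<phi> \<omega> / \<alpha>) * p (A y) \<omega> \<partial>P)
     + \<alpha> * ln (\<integral>\<omega>. exp (- \<phi> \<omega> / \<alpha>) * p (A x) \<omega> \<partial>P)
     + 2 * \<alpha> * r"

definition Phi_star :: "'w measure \<Rightarrow> ('m \<Rightarrow> 'w \<Rightarrow> real) \<Rightarrow> ('n \<Rightarrow> 'm) \<Rightarrow> 'n set \<Rightarrow> ('n::real_inner)
    \<Rightarrow> ('w \<Rightarrow> real) set \<Rightarrow> real \<Rightarrow> ereal" where
  "Phi_star P p A X g F r =
     ereal (1/2) * Inf {(SUP xy\<in>X \<times> X. ereal (Phi_r P p A g r (fst xy) (snd xy) \<phi> \<alpha>))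
                         | \<phi> \<alpha>. \<phi> \<in> F \<and> \<alpha> > 0}"

end

theory Submission imports Defs begin

lemma markov:
  fixes P :: "'w measure"
  assumes f: "f \<in> borel_measurable P" and q: "q \<in> borel_measurable P"
    and qn: "\<forall>\<omega>\<in>space P. q \<omega> \<ge> 0"
    and int: "integrable P (\<lambda>\<omega>. exp (f \<omega>) * q \<omega>)"
  shows "measure (density P (\<lambda>\<omega>. ennreal (q \<omega>))) {\<omega>\<in>space P. f \<omega> > s}
         \<le> exp (ln (\<integral>\<omega>. exp (f \<omega>) * q \<omega> \<partial>P) - s)"
proof -
  let ?I = "\<integral>\<omega>. exp (f \<omega>) * q \<omega> \<partial>P"
  have I0: "?I \<ge> 0" using qn by (intro integral_nonneg_AE AE_I2) auto
  have Ile: "?I \<le> exp (ln ?I)"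
    using I0 by (cases "?I = 0") auto
  have E: "{\<omega>\<in>space P. f \<omega> > s} \<in> sets P" using f by measurable
  have "emeasure (density P (\<lambda>\<omega>. ennreal (q \<omega>))) {\<omega>\<in>space P. f \<omega> > s}
        = (\<integral>\<^sup>+\<omega>. ennreal (q \<omega>) * indicator {\<omega>\<in>space P. f \<omega> > s} \<omega> \<partial>P)"
    using q E by (simp add: emeasure_density)
  also have "\<dots> \<le> (\<integral>\<^sup>+\<omega>. ennreal (exp (-s) * (exp (f \<omega>) * q \<omega>)) \<partial>P)"
  proof (rule nn_integral_mono)
    fix \<omega> assume w: "\<omega> \<in> space P"
    show "ennreal (q \<omega>) * indicator {\<omega>\<in>space P. f \<omega> > s} \<omega> \<le> ennreal (exp (-s) * (exp (f \<omega>) * q \<omega>))"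
    proof (cases "f \<omega> > s")
      case True
      have "exp 0 \<le> exp (f \<omega> - s)" using True by simp
      then have "1 \<le> exp (-s) * exp (f \<omega>)" by (simp add: exp_diff exp_minus field_simps)
      then have "q \<omega> \<le> exp (-s) * (exp (f \<omega>) * q \<omega>)"
        using qn w mult_right_mono[of 1 "exp (-s) * exp (f \<omega>)" "q \<omega>"] by (simp add: mult.assoc)
      then show ?thesis using True w by (simp add: indicator_def ennreal_leI)
    qed (simp add: indicator_def)
  qed
  also have "\<dots> = ennreal (\<integral>\<omega>. exp (-s) * (exp (f \<omega>) * q \<omega>) \<partial>P)"
    using int qn by (intro nn_integral_eq_integral) auto
  also have "\<dots> = ennreal (exp (-s) * ?I)" by simp
  finally have "emeasure (density P (\<lambda>\<omega>. ennreal (q \<omega>))) {\<omega>\<in>space P. f \<omega> > s} \<le> ennreal (exp (-s) * ?I)" .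
  then have "measure (density P (\<lambda>\<omega>. ennreal (q \<omega>))) {\<omega>\<in>space P. f \<omega> > s} \<le> exp (-s) * ?I"
    unfolding measure_def using I0 by (intro enn2real_leI) auto
  also have "\<dots> \<le> exp (-s) * exp (ln ?I)" using Ile by simp
  also have "\<dots> = exp (ln ?I - s)" by (simp add: exp_diff exp_minus field_simps)
  finally show ?thesis .
qed

lemma key:
  fixes P :: "'w measure" and p :: "'m \<Rightarrow> 'w \<Rightarrow> real" and g :: "'n::real_inner" and A :: "'n \<Rightarrow> 'm"
  assumes X_ne: "X \<noteq> {}"
    and meas_phi: "\<phi> \<in> borel_measurable P"
    and meas_p: "\<And>x. x \<in> X \<Longrightarrow> p (A x) \<in> borel_measurable P"
    and pnn: "\<And>x. x \<in> X \<Longrightarrow> \<forall>\<omega>\<in>space P. p (A x) \<omega> \<ge> 0"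
    and int1: "\<And>x. x \<in> X \<Longrightarrow> integrable P (\<lambda>\<omega>. exp (\<phi> \<omega> / \<alpha>) * p (A x) \<omega>)"
    and int2: "\<And>x. x \<in> X \<Longrightarrow> integrable P (\<lambda>\<omega>. exp (- \<phi> \<omega> / \<alpha>) * p (A x) \<omega>)"
    and tot: "\<And>x. x \<in> X \<Longrightarrow> (\<integral>\<^sup>+\<omega>. ennreal (p (A x) \<omega>) \<partial>P) = 1"
    and alpha: "\<alpha> > 0" and eps: "0 < \<epsilon>"
    and T: "\<And>x y. x \<in> X \<Longrightarrow> y \<in> X \<Longrightarrow> Phi_r P p A g (ln (2/\<epsilon>)) x y \<phi> \<alpha> \<le> T"
    and eta: "\<eta> > 0"
  shows "\<exists>c. \<forall>x\<in>X. dev_prob P p A g (\<lambda>\<omega>. \<phi> \<omega> + c) x (T/2 + \<eta>) \<le> \<epsilon> * exp (- \<eta> / \<alpha>)"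
proof -
  define r where "r = ln (2/\<epsilon>)"
  define I1 where "I1 x = (\<integral>\<omega>. exp (\<phi> \<omega> / \<alpha>) * p (A x) \<omega> \<partial>P)" for x
  define I2 where "I2 x = (\<integral>\<omega>. exp (- \<phi> \<omega> / \<alpha>) * p (A x) \<omega> \<partial>P)" for x
  define a where "a x = g \<bullet> x + \<alpha> * ln (I2 x) + \<alpha> * r" for x
  define b where "b y = - (g \<bullet> y) + \<alpha> * ln (I1 y) + \<alpha> * r" for y
  have ab: "a x + b y \<le> T" if "x \<in> X" "y \<in> X" for x y
    using T[OF that] unfolding Phi_r_def a_def b_def I1_def I2_def r_def by (simp add: algebra_simps)
  obtain y0 where y0: "y0 \<in> X" using X_ne by blast
  define As where "As = Sup (a ` X)"
  define Bs where "Bs = Sup (b ` X)"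
  have bddA: "bdd_above (a ` X)"
    using ab y0 by (intro bdd_aboveI[of _ "T - b y0"]) (force simp: algebra_simps)
  have bddB: "bdd_above (b ` X)"
    using ab y0 by (intro bdd_aboveI[of _ "T - a y0"]) (force simp: algebra_simps)
  have aA: "a x \<le> As" if "x \<in> X" for x unfolding As_def using bddA that by (intro cSUP_upper)
  have bB: "b x \<le> Bs" if "x \<in> X" for x unfolding Bs_def using bddB that by (intro cSUP_upper)
  have "b y \<le> T - As" if "y \<in> X" for y
  proof -
    have "As \<le> T - b y" unfolding As_def using X_ne ab[OF _ that] by (intro cSUP_least) (auto simp: algebra_simps)
    then show ?thesis by simp
  qed
  then have "Bs \<le> T - As" unfolding Bs_def using X_ne by (intro cSUP_least) auto
  then have ABT: "As + Bs \<le> T" by simp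
  define c where "c = (As - Bs) / 2"
  define t where "t = T/2 + \<eta>"
  have er: "exp (- \<eta> / \<alpha> - r) = exp (- \<eta> / \<alpha>) * (\<epsilon> / 2)"
    unfolding r_def using eps by (simp add: exp_diff)
  show ?thesis
  proof (intro exI[of _ c] ballI)
    fix x assume x: "x \<in> X"
    let ?Q = "density P (\<lambda>\<omega>. ennreal (p (A x) \<omega>))"
    define E1 where "E1 = {\<omega>\<in>space P. \<phi> \<omega> / \<alpha> > (g \<bullet> x + t - c) / \<alpha>}"
    define E2 where "E2 = {\<omega>\<in>space P. - \<phi> \<omega> / \<alpha> > (t + c - g \<bullet> x) / \<alpha>}"
    have emQ: "emeasure ?Q (space ?Q) = 1"
    proof -
      have "emeasure ?Q (space ?Q) = (\<integral>\<^sup>+\<omega>. ennreal (p (A x) \<omega>) * indicator (space P) \<omega> \<partial>P)"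
        using meas_p[OF x] by (simp add: emeasure_density)
      also have "\<dots> = (\<integral>\<^sup>+\<omega>. ennreal (p (A x) \<omega>) \<partial>P)"
        by (rule nn_integral_cong) simp
      finally show ?thesis using tot[OF x] by simp
    qed
    then have finQ: "finite_measure ?Q" by (intro finite_measureI) simp
    have sub: "{\<omega>\<in>space P. \<bar>\<phi> \<omega> + c - g \<bullet> x\<bar> > t} \<subseteq> E1 \<union> E2"
    proof
      fix \<omega> assume "\<omega> \<in> {\<omega>\<in>space P. \<bar>\<phi> \<omega> + c - g \<bullet> x\<bar> > t}"
      then have w: "\<omega> \<in> space P" and h: "\<bar>\<phi> \<omega> + c - g \<bullet> x\<bar> > t" by auto
      have "\<phi> \<omega> > g \<bullet> x + t - c \<or> - \<phi> \<omega> > t + c - g \<bullet> x"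
        using h by linarith
      then show "\<omega> \<in> E1 \<union> E2"
      proof
        assume "\<phi> \<omega> > g \<bullet> x + t - c"
        then have "\<phi> \<omega> / \<alpha> > (g \<bullet> x + t - c) / \<alpha>" using alpha by (rule divide_strict_right_mono)
        then show ?thesis using w unfolding E1_def by blast
      next
        assume "- \<phi> \<omega> > t + c - g \<bullet> x"
        then have "- \<phi> \<omega> / \<alpha> > (t + c - g \<bullet> x) / \<alpha>" using alpha by (rule divide_strict_right_mono)
        then show ?thesis using w unfolding E2_def by blast
      qed
    qed
    have E1s: "E1 \<in> sets P" unfolding E1_def using meas_phi by measurable
    have E2s: "E2 \<in> sets P" unfolding E2_def using meas_phi by measurable
    have "dev_prob P p A g (\<lambda>\<omega>. \<phi> \<omega> + c) x t = measure ?Q {\<omega>\<in>space P. \<bar>\<phi> \<omega> + c - g \<bullet> x\<bar> > t}"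
      unfolding dev_prob_def by simp
    also have "\<dots> \<le> measure ?Q (E1 \<union> E2)"
      using finQ sub E1s E2s by (intro finite_measure.finite_measure_mono) auto
    also have "\<dots> \<le> measure ?Q E1 + measure ?Q E2"
      using E1s E2s by (intro measure_Un_le) auto
    also have "\<dots> \<le> exp (- \<eta> / \<alpha> - r) + exp (- \<eta> / \<alpha> - r)"
    proof (rule add_mono)
      have "measure ?Q E1 \<le> exp (ln (I1 x) - (g \<bullet> x + t - c) / \<alpha>)"
        unfolding E1_def I1_def
        by (rule markov[where f="\<lambda>\<omega>. \<phi> \<omega> / \<alpha>"]) (use meas_phi meas_p[OF x] pnn[OF x] int1[OF x] in auto)
      also have "\<dots> \<le> exp (- \<eta> / \<alpha> - r)"
      proof -
        have "\<alpha> * ln (I1 x) = b x + g \<bullet> x - \<alpha> * r" unfolding b_def by simp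
        then have lin: "\<alpha> * ln (I1 x) - (g \<bullet> x + t - c) \<le> - \<eta> - \<alpha> * r"
          using bB[OF x] ABT unfolding c_def t_def by (simp add: field_simps)
        have e1: "\<alpha> * (ln (I1 x) - (g \<bullet> x + t - c) / \<alpha>) = \<alpha> * ln (I1 x) - (g \<bullet> x + t - c)"
          using alpha by (simp add: field_simps)
        have e2: "\<alpha> * (- \<eta> / \<alpha> - r) = - \<eta> - \<alpha> * r"
          using alpha by (simp add: field_simps)
        have "\<alpha> * (ln (I1 x) - (g \<bullet> x + t - c) / \<alpha>) \<le> \<alpha> * (- \<eta> / \<alpha> - r)"
          unfolding e1 e2 by (rule lin)
        then show ?thesis using alpha by simp
      qed
      finally show "measure ?Q E1 \<le> exp (- \<eta> / \<alpha> - r)" .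
    next
      have "measure ?Q E2 \<le> exp (ln (I2 x) - (t + c - g \<bullet> x) / \<alpha>)"
        unfolding E2_def I2_def
        by (rule markov[where f="\<lambda>\<omega>. - \<phi> \<omega> / \<alpha>"]) (use meas_phi meas_p[OF x] pnn[OF x] int2[OF x] in auto)
      also have "\<dots> \<le> exp (- \<eta> / \<alpha> - r)"
      proof -
        have "\<alpha> * ln (I2 x) = a x - g \<bullet> x - \<alpha> * r" unfolding a_def by simp
        then have lin: "\<alpha> * ln (I2 x) - (t + c - g \<bullet> x) \<le> - \<eta> - \<alpha> * r"
          using aA[OF x] ABT unfolding c_def t_def by (simp add: field_simps)
        have e1: "\<alpha> * (ln (I2 x) - (t + c - g \<bullet> x) / \<alpha>) = \<alpha> * ln (I2 x) - (t + c - g \<bullet> x)"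
          using alpha by (simp add: field_simps)
        have e2: "\<alpha> * (- \<eta> / \<alpha> - r) = - \<eta> - \<alpha> * r"
          using alpha by (simp add: field_simps)
        have "\<alpha> * (ln (I2 x) - (t + c - g \<bullet> x) / \<alpha>) \<le> \<alpha> * (- \<eta> / \<alpha> - r)"
          unfolding e1 e2 by (rule lin)
        then show ?thesis using alpha by simp
      qed
      finally show "measure ?Q E2 \<le> exp (- \<eta> / \<alpha> - r)" .
    qed
    also have "\<dots> = \<epsilon> * exp (- \<eta> / \<alpha>)" using er by (simp add: mult.commute)
    finally show "dev_prob P p A g (\<lambda>\<omega>. \<phi> \<omega> + c) x (T/2 + \<eta>) \<le> \<epsilon> * exp (- \<eta> / \<alpha>)"
      unfolding t_def .
  qed
qed

theorem lemma3p1: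
  fixes P :: "'w::polish_space measure"
    and M :: "(real^'m) set"
    and p :: "real^'m \<Rightarrow> 'w \<Rightarrow> real"
    and F :: "('w \<Rightarrow> real) set"
    and X :: "(real^'n) set"
    and A :: "real^'n \<Rightarrow> real^'m"
    and g :: "real^'n"
    and \<epsilon> :: real
  assumes P_borel: "sets P = sets borel"
    and P_sigma_finite: "sigma_finite_measure P"
    and D: "density_family P M p"
    and F_space: "fin_dim_borel_space P F"
    and F_const: "contains_constants F"
    and good: "good_pair P M p F"
    and X_ne: "X \<noteq> {}" and X_convex: "convex X" and X_compact: "compact X"
    and A_affine: "affine_map A" and A_X: "A ` X \<subseteq> M"
    and eps: "0 < \<epsilon>" "\<epsilon> < 1"
  shows "RiskA P p A X g F \<epsilon> \<le> Phi_star P p A X g F (ln (2 / \<epsilon>)) \<and>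
         (\<forall>\<delta>>0. \<exists>\<phi>\<in>F. \<exists>c::real.
            Risk P p A X g (\<lambda>\<omega>. \<phi> \<omega> + c) \<epsilon> \<le> Phi_star P p A X g F (ln (2 / \<epsilon>)) + ereal \<delta>)"
proof -
  obtain k :: nat and bb :: "nat \<Rightarrow> 'w \<Rightarrow> real" where bb: "\<forall>i<k. bb i \<in> borel_measurable P"
    and Feq: "F = {(\<lambda>\<omega>. \<Sum>i<k. c i * bb i \<omega>) | c. True}"
    using F_space unfolding fin_dim_borel_space_def by blast
  have Fmeas: "\<psi> \<in> borel_measurable P" if psi: "\<psi> \<in> F" for \<psi>
  proof -
    obtain c where "\<psi> = (\<lambda>\<omega>. \<Sum>i<k. c i * bb i \<omega>)" using psi Feq by blast
    moreover have "(\<lambda>\<omega>. \<Sum>i<k. c i * bb i \<omega>) \<in> borel_measurable P"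
      using bb by (intro borel_measurable_sum borel_measurable_times borel_measurable_const) auto
    ultimately show ?thesis by simp
  qed
  have Fsc: "(\<lambda>\<omega>. u * \<psi> \<omega>) \<in> F" if psi: "\<psi> \<in> F" for \<psi> u
  proof -
    obtain c where "\<psi> = (\<lambda>\<omega>. \<Sum>i<k. c i * bb i \<omega>)" using psi Feq by blast
    then have "(\<lambda>\<omega>. u * \<psi> \<omega>) = (\<lambda>\<omega>. \<Sum>i<k. (u * c i) * bb i \<omega>)"
      by (simp add: sum_distrib_left mult.assoc)
    then show ?thesis unfolding Feq by (intro CollectI exI[of _ "\<lambda>i. u * c i"]) simp
  qed
  have Fadd: "(\<lambda>\<omega>. \<psi>1 \<omega> + \<psi>2 \<omega>) \<in> F" if psi: "\<psi>1 \<in> F" "\<psi>2 \<in> F" for \<psi>1 \<psi>2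
  proof -
    obtain c1 where "\<psi>1 = (\<lambda>\<omega>. \<Sum>i<k. c1 i * bb i \<omega>)" using psi Feq by blast
    moreover obtain c2 where "\<psi>2 = (\<lambda>\<omega>. \<Sum>i<k. c2 i * bb i \<omega>)" using psi Feq by blast
    ultimately have "(\<lambda>\<omega>. \<psi>1 \<omega> + \<psi>2 \<omega>) = (\<lambda>\<omega>. \<Sum>i<k. (c1 i + c2 i) * bb i \<omega>)"
      by (simp add: sum.distrib distrib_right)
    then show ?thesis unfolding Feq by (intro CollectI exI[of _ "\<lambda>i. c1 i + c2 i"]) simp
  qed
  have Fconst: "(\<lambda>_. c) \<in> F" for c using F_const unfolding contains_constants_def by blast
  have Fdiv: "(\<lambda>\<omega>. \<psi> \<omega> / \<alpha>) \<in> F" if "\<psi> \<in> F" for \<psi> \<alpha>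
    using Fsc[OF that, of "1/\<alpha>"] by simp
  have Fndiv: "(\<lambda>\<omega>. - \<psi> \<omega> / \<alpha>) \<in> F" if "\<psi> \<in> F" for \<psi> \<alpha>
    using Fsc[OF that, of "-1/\<alpha>"] by simp
  have Fshift: "(\<lambda>\<omega>. \<psi> \<omega> + c) \<in> F" if "\<psi> \<in> F" for \<psi> c
    using Fadd[OF that Fconst] .
  have gint: "integrable P (\<lambda>\<omega>. exp (\<psi> \<omega>) * p \<mu> \<omega>)" if "\<psi> \<in> F" "\<mu> \<in> M" for \<psi> \<mu>
    using good that unfolding good_pair_def by blast
  have AX: "A x \<in> M" if "x \<in> X" for x using A_X that by blast
  have Dp: "p (A x) \<in> borel_measurable P" "\<forall>\<omega>\<in>space P. p (A x) \<omega> \<ge> 0"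
     "(\<integral>\<^sup>+\<omega>. ennreal (p (A x) \<omega>) \<partial>P) = 1" if "x \<in> X" for x
    using D AX[OF that] unfolding density_family_def by blast+
  have core: "\<exists>c. \<forall>x\<in>X. dev_prob P p A g (\<lambda>\<omega>. \<phi> \<omega> + c) x (T/2 + \<eta>) \<le> \<epsilon> * exp (- \<eta> / \<alpha>)"
    if phi: "\<phi> \<in> F" and al: "\<alpha> > 0" and T: "\<And>x y. x \<in> X \<Longrightarrow> y \<in> X \<Longrightarrow> Phi_r P p A g (ln (2/\<epsilon>)) x y \<phi> \<alpha> \<le> T"
      and eta: "\<eta> > 0" for \<phi> \<alpha> T \<eta>
    by (rule key[OF X_ne Fmeas[OF phi] Dp(1) Dp(2) gint[OF Fdiv[OF phi] AX] gint[OF Fndiv[OF phi] AX]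
          Dp(3) al eps(1) T eta])
  have riskb: "\<exists>c. Risk P p A X g (\<lambda>\<omega>. \<phi> \<omega> + c) \<epsilon> \<le> ereal (T/2 + \<eta>)"
    if phi: "\<phi> \<in> F" and al: "\<alpha> > 0" and T: "\<And>x y. x \<in> X \<Longrightarrow> y \<in> X \<Longrightarrow> Phi_r P p A g (ln (2/\<epsilon>)) x y \<phi> \<alpha> \<le> T"
      and eta: "\<eta> > 0" for \<phi> \<alpha> T \<eta>
  proof -
    obtain c where c: "\<forall>x\<in>X. dev_prob P p A g (\<lambda>\<omega>. \<phi> \<omega> + c) x (T/2 + \<eta>) \<le> \<epsilon> * exp (- \<eta> / \<alpha>)"
      using core[OF phi al T eta] by blast
    have "(SUP x\<in>X. dev_prob P p A g (\<lambda>\<omega>. \<phi> \<omega> + c) x (T/2 + \<eta>)) \<le> \<epsilon> * exp (- \<eta> / \<alpha>)"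
      using X_ne c by (intro cSUP_least) auto
    also have "\<dots> < \<epsilon>" using eps al eta by simp
    finally have "ereal (T/2 + \<eta>) \<in> {ereal \<delta> | \<delta>. (SUP x\<in>X. dev_prob P p A g (\<lambda>\<omega>. \<phi> \<omega> + c) x \<delta>) < \<epsilon>}"
      by blast
    then have "Risk P p A X g (\<lambda>\<omega>. \<phi> \<omega> + c) \<epsilon> \<le> ereal (T/2 + \<eta>)"
      unfolding Risk_def by (rule Inf_lower)
    then show ?thesis by blast
  qed
  have Tnn: "T \<ge> 0"
    if phi: "\<phi> \<in> F" and al: "\<alpha> > 0" and T: "\<And>x y. x \<in> X \<Longrightarrow> y \<in> X \<Longrightarrow> Phi_r P p A g (ln (2/\<epsilon>)) x y \<phi> \<alpha> \<le> T"
    for \<phi> \<alpha> T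
  proof (rule ccontr)
    assume "\<not> T \<ge> 0"
    then have eta: "- T / 4 > 0" and neg: "T/2 + (- T / 4) < 0" by auto
    obtain c where c: "\<forall>x\<in>X. dev_prob P p A g (\<lambda>\<omega>. \<phi> \<omega> + c) x (T/2 + (- T/4)) \<le> \<epsilon> * exp (- (- T/4) / \<alpha>)"
      using core[OF phi al T eta] by blast
    obtain x0 where x0: "x0 \<in> X" using X_ne by blast
    let ?Q = "density P (\<lambda>\<omega>. ennreal (p (A x0) \<omega>))"
    have "{\<omega>\<in>space P. \<bar>\<phi> \<omega> + c - g \<bullet> x0\<bar> > T/2 + (- T/4)} = space ?Q"
    proof -
      have "\<forall>\<omega>. T/2 + (- T/4) < \<bar>\<phi> \<omega> + c - g \<bullet> x0\<bar>" using neg by (meson abs_ge_zero less_le_trans)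
      then show ?thesis by auto
    qed
    then have dv: "dev_prob P p A g (\<lambda>\<omega>. \<phi> \<omega> + c) x0 (T/2 + (- T/4)) = measure ?Q (space ?Q)"
      unfolding dev_prob_def by simp
    have "emeasure ?Q (space ?Q) = (\<integral>\<^sup>+\<omega>. ennreal (p (A x0) \<omega>) * indicator (space P) \<omega> \<partial>P)"
      using Dp(1)[OF x0] by (simp add: emeasure_density)
    also have "\<dots> = (\<integral>\<^sup>+\<omega>. ennreal (p (A x0) \<omega>) \<partial>P)"
      by (rule nn_integral_cong) simp
    also have "\<dots> = 1" using Dp(3)[OF x0] .
    finally have "dev_prob P p A g (\<lambda>\<omega>. \<phi> \<omega> + c) x0 (T/2 + (- T/4)) = 1"
      using dv by (simp add: measure_def)
    moreover have "\<epsilon> * exp (- (- T/4) / \<alpha>) < 1"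
    proof -
      have "exp (- (- T/4) / \<alpha>) < 1" using eta al by (simp add: divide_neg_pos)
      then show ?thesis using eps mult_strict_mono[of \<epsilon> 1 "exp (- (- T/4) / \<alpha>)" 1] by simp
    qed
    ultimately show False using c x0 by auto
  qed
  define Sset where "Sset = {(SUP xy\<in>X \<times> X. ereal (Phi_r P p A g (ln (2 / \<epsilon>)) (fst xy) (snd xy) \<phi> \<alpha>))
                         | \<phi> \<alpha>. \<phi> \<in> F \<and> \<alpha> > 0}"
  have PS: "Phi_star P p A X g F (ln (2 / \<epsilon>)) = ereal (1/2) * Inf Sset"
    unfolding Phi_star_def Sset_def by simp
  have elem: "\<exists>T. S = ereal T \<and> T \<ge> 0 \<and> (\<forall>\<eta>>0. \<exists>\<phi>\<in>F. \<exists>c. Risk P p A X g (\<lambda>\<omega>. \<phi> \<omega> + c) \<epsilon> \<le> ereal (T/2 + \<eta>))"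
    if Sin: "S \<in> Sset" "S \<noteq> \<infinity>" for S
  proof -
    obtain \<phi> \<alpha> where phi: "\<phi> \<in> F" and al: "\<alpha> > 0"
      and S: "S = (SUP xy\<in>X \<times> X. ereal (Phi_r P p A g (ln (2 / \<epsilon>)) (fst xy) (snd xy) \<phi> \<alpha>))"
      using Sin(1) unfolding Sset_def by blast
    obtain x0 where x0: "x0 \<in> X" using X_ne by blast
    have up: "ereal (Phi_r P p A g (ln (2 / \<epsilon>)) x y \<phi> \<alpha>) \<le> S" if "x \<in> X" "y \<in> X" for x y
      unfolding S using that by (intro SUP_upper2[of "(x,y)"]) auto
    have "S \<noteq> -\<infinity>" using up[OF x0 x0] by auto
    then obtain T where ST: "S = ereal T" using \<open>S \<noteq> \<infinity>\<close> by (cases S) auto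
    have T: "Phi_r P p A g (ln (2/\<epsilon>)) x y \<phi> \<alpha> \<le> T" if "x \<in> X" "y \<in> X" for x y
      using up[OF that] ST by simp
    show ?thesis
      using ST Tnn[OF phi al T] riskb[OF phi al T] phi by blast
  qed
  have Sge: "Inf Sset \<ge> 0"
  proof (rule Inf_greatest)
    fix S assume "S \<in> Sset"
    then show "0 \<le> S" using elem[of S] by (cases "S = \<infinity>") auto
  qed
  have second: "\<forall>\<delta>>0. \<exists>\<phi>\<in>F. \<exists>c::real.
            Risk P p A X g (\<lambda>\<omega>. \<phi> \<omega> + c) \<epsilon> \<le> Phi_star P p A X g F (ln (2 / \<epsilon>)) + ereal \<delta>"
  proof (intro allI impI)
    fix \<delta> :: real assume d: "\<delta> > 0"
    show "\<exists>\<phi>\<in>F. \<exists>c::real. Risk P p A X g (\<lambda>\<omega>. \<phi> \<omega> + c) \<epsilon> \<le> Phi_star P p A X g F (ln (2 / \<epsilon>)) + ereal \<delta>"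
    proof (cases "Inf Sset = \<infinity>")
      case True
      then have "Phi_star P p A X g F (ln (2 / \<epsilon>)) = \<infinity>" unfolding PS by simp
      then show ?thesis using Fconst by auto
    next
      case False
      with Sge obtain s0 where s0: "Inf Sset = ereal s0" by (cases "Inf Sset") auto
      have "Inf Sset < ereal (s0 + \<delta>)" using s0 d by simp
      then obtain S where S: "S \<in> Sset" "S < ereal (s0 + \<delta>)" by (auto simp: Inf_less_iff)
      then have "S \<noteq> \<infinity>" by auto
      from elem[OF S(1) this] obtain T where T: "S = ereal T"
        and R: "\<forall>\<eta>>0. \<exists>\<phi>\<in>F. \<exists>c. Risk P p A X g (\<lambda>\<omega>. \<phi> \<omega> + c) \<epsilon> \<le> ereal (T/2 + \<eta>)" by blast
      have Tl: "T < s0 + \<delta>" using S(2) T by simp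
      obtain \<phi> c where phi: "\<phi> \<in> F" and c: "Risk P p A X g (\<lambda>\<omega>. \<phi> \<omega> + c) \<epsilon> \<le> ereal (T/2 + \<delta>/2)"
        using R d by (meson half_gt_zero)
      have "ereal (T/2 + \<delta>/2) \<le> ereal (s0/2 + \<delta>)" using Tl by simp
      also have "\<dots> = Phi_star P p A X g F (ln (2 / \<epsilon>)) + ereal \<delta>"
        unfolding PS s0 by simp
      finally show ?thesis using phi c by (meson order.trans)
    qed
  qed
  have first: "RiskA P p A X g F \<epsilon> \<le> Phi_star P p A X g F (ln (2 / \<epsilon>))"
  proof (rule ereal_le_epsilon2)
    fix e :: real assume "0 < e"
    then obtain \<phi> c where phi: "\<phi> \<in> F" and c: "Risk P p A X g (\<lambda>\<omega>. \<phi> \<omega> + c) \<epsilon> \<le> Phi_star P p A X g F (ln (2 / \<epsilon>)) + ereal e"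
      using second by blast
    have "RiskA P p A X g F \<epsilon> \<le> Risk P p A X g (\<lambda>\<omega>. \<phi> \<omega> + c) \<epsilon>"
      unfolding RiskA_def using Fshift[OF phi] by (intro Inf_lower) blast
    then show "RiskA P p A X g F \<epsilon> \<le> Phi_star P p A X g F (ln (2 / \<epsilon>)) + ereal e" using c by simp
  qed
  show ?thesis using first second by blast
qed

end
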